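(* Let $\mathbb{F}$ be a field of characteristic different from $2$ and $V$ an $n$-dimensional $\mathbb{F}$-vector space. Let $H\leq V$ be a hyperplane defined by $l_H\in V^*$, and let $G_H\leq \mathrm{GL}(V)$ be a finite group of reflections about $H$ (i.e. a finite group fixing $H$ pointwise). Let $K_H$ be the kernel of $\det$ on $G_H$, let $e_H=|G_H:K_H|$, let $s_H\in G_H$ be a diagonalizable reflection of order $e_H$ (with $s_H=1$ if $e_H=1$), and let $b_H$ be the dimension of the span of the root vectors of the transvections in $K_H$. Let $v_1,\dots,v_n$ be a basis of $V$ such that: $v_1,\dots,v_{n-1}$ is a basis of $H$; $v_1,\dots,v_{b_H}$ are $\mathbb{F}$-independent root vectors (with respect to $l_H$) of transvections in $K_H$; and $v_n\notin H$ is an eigenvector of $s_H$ with $l_H(v_n)=1$. (Such a basis always exists.) Let $z_1,\dots,z_n$ be the dual basis of $V^*$. Then: (1) If $\mu$ is a $K_H$-invariant differential form, written $\mu=\sum_I u_I\,dz_I$ with $u_I\in\mathbb{F}[V]$, and $J$ is an index set with $J\cap\{1,\dots,b_H\}\neq\varnothing$ and $n\notin J$, then $l_H$ divides $u_J$. (2) If moreover $\mu$ is $G_H$-invariant, then $u_J$ is divisible by $l_H^{e_H}$.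
   Context: $\mathbb{F}[V]=S(V^* )$; $\Omega^k=\mathbb{F}[V]\otimes\Lambda^k(V^* )$, $\Omega=\bigoplus_k\Omega^k$, with a group $G\le\mathrm{GL}(V)$ acting on $V^*$ by $(gf)(v)=f(g^{-1}v)$ and diagonally on $\Omega$. For an ordered index set $I=\{i_1<\dots<i_m\}\subseteq\{1,\dots,n\}$, $dz_I=dz_{i_1}\wedge\cdots\wedge dz_{i_m}$; every form is uniquely $\sum_I u_I dz_I$. A reflection about $H$ is a finite-order element of $\mathrm{GL}(V)$ with fixed space $H$; it satisfies $s(v)=v+l_H(v)\alpha_s$ for a root vector $\alpha_s\in V$, and it is a transvection if $\alpha_s\in H$, diagonalizable otherwise. *)

theory Defs
  imports "HOL-Library.Poly_Mapping" "Jordan_Normal_Form.DL_Rank"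
begin

type_synonym 'a mpoly = "(nat \<Rightarrow>\<^sub>0 nat) \<Rightarrow>\<^sub>0 'a"

definition Var :: "nat \<Rightarrow> 'a::comm_ring_1 mpoly" where
  "Var i = Poly_Mapping.single (Poly_Mapping.single i 1) 1"

definition Const :: "'a::comm_ring_1 \<Rightarrow> 'a mpoly" where
  "Const c = Poly_Mapping.single 0 c"

definition vars :: "'a::zero mpoly \<Rightarrow> nat set" where
  "vars p = \<Union> (Poly_Mapping.keys ` Poly_Mapping.keys p)"

definition subst :: "(nat \<Rightarrow> 'a::comm_ring_1 mpoly) \<Rightarrow> 'a mpoly \<Rightarrow> 'a mpoly" where
  "subst \<sigma> p = (\<Sum>m\<in>Poly_Mapping.keys p.
       Const (Poly_Mapping.lookup p m) * (\<Prod>i\<in>Poly_Mapping.keys m. \<sigma> i ^ Poly_Mapping.lookup m i))"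

definition lin_poly :: "nat \<Rightarrow> 'a::comm_ring_1 vec \<Rightarrow> 'a mpoly" where
  "lin_poly n c = (\<Sum>i<n. Const (c $ i) * Var i)"

section \<open>Matrices: V is identified with F^n via the basis v_0..v_(n-1)\<close>

definition minv :: "nat \<Rightarrow> 'a::field mat \<Rightarrow> 'a mat" where
  "minv n A = (SOME B. B \<in> carrier_mat n n \<and> A * B = 1\<^sub>m n \<and> B * A = 1\<^sub>m n)"

text \<open>(g f)(v) = f(g^-1 v); in coordinates g z_i = sum_j (g^-1)_(ij) z_j.\<close>
definition act_poly :: "nat \<Rightarrow> 'a::field mat \<Rightarrow> 'a mpoly \<Rightarrow> 'a mpoly" where
  "act_poly n g f = subst (\<lambda>i. if i < n then lin_poly n (row (minv n g) i) else Var i) f"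

section \<open>Differential forms: mu = sum_I u_I dz_I, represented by I \<mapsto> u_I\<close>

type_synonym 'a form = "nat set \<Rightarrow> 'a mpoly"

definition is_form :: "nat \<Rightarrow> 'a::field form \<Rightarrow> bool" where
  "is_form n \<mu> \<longleftrightarrow> (\<forall>I. (\<not> I \<subseteq> {..<n} \<longrightarrow> \<mu> I = 0) \<and> vars (\<mu> I) \<subseteq> {..<n})"

definition minor :: "'a::comm_ring_1 mat \<Rightarrow> nat set \<Rightarrow> nat set \<Rightarrow> 'a" where
  "minor C I J = det (mat (card I) (card J)
      (\<lambda>(k, l). C $$ (sorted_list_of_set I ! k, sorted_list_of_set J ! l)))"

text \<open>Diagonal action: g(u_I dz_I) = g(u_I) * (g dz_i1) ^ ... ^ (g dz_im), and
  g dz_i = sum_j (g^-1)_(ij) dz_j, so the coefficient of dz_J is a minor.\<close>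
definition act_form :: "nat \<Rightarrow> 'a::field mat \<Rightarrow> 'a form \<Rightarrow> 'a form" where
  "act_form n g \<mu> J = (if J \<subseteq> {..<n} then
      (\<Sum>I\<in>{I \<in> Pow {..<n}. card I = card J}. Const (minor (minv n g) I J) * act_poly n g (\<mu> I))
    else 0)"

definition invariant_form :: "nat \<Rightarrow> 'a::field mat set \<Rightarrow> 'a form \<Rightarrow> bool" where
  "invariant_form n S \<mu> \<longleftrightarrow> (\<forall>g\<in>S. act_form n g \<mu> = \<mu>)"

definition mat_group :: "nat \<Rightarrow> 'a::field mat set \<Rightarrow> bool" where
  "mat_group n G \<longleftrightarrow> G \<subseteq> carrier_mat n n \<and> 1\<^sub>m n \<in> G \<and> (\<forall>g\<in>G. \<forall>h\<in>G. g * h \<in> G)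
     \<and> (\<forall>g\<in>G. \<exists>h\<in>G. g * h = 1\<^sub>m n \<and> h * g = 1\<^sub>m n)"

definition is_root_vector :: "nat \<Rightarrow> 'a::field vec \<Rightarrow> 'a mat \<Rightarrow> 'a vec \<Rightarrow> bool" where
  "is_root_vector n c s \<alpha> \<longleftrightarrow> \<alpha> \<in> carrier_vec n \<and>
     (\<forall>v\<in>carrier_vec n. s *\<^sub>v v = v + (c \<bullet> v) \<cdot>\<^sub>v \<alpha>)"

definition is_transvection :: "nat \<Rightarrow> 'a::field vec \<Rightarrow> 'a mat \<Rightarrow> bool" where
  "is_transvection n c s \<longleftrightarrow> s \<in> carrier_mat n n \<and> s \<noteq> 1\<^sub>m n \<and>
     (\<exists>\<alpha>. is_root_vector n c s \<alpha> \<and> c \<bullet> \<alpha> = 0)"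

definition is_diag_reflection :: "nat \<Rightarrow> 'a::field vec \<Rightarrow> 'a mat \<Rightarrow> bool" where
  "is_diag_reflection n c s \<longleftrightarrow> s \<in> carrier_mat n n \<and> s \<noteq> 1\<^sub>m n \<and>
     (\<exists>\<alpha>. is_root_vector n c s \<alpha> \<and> c \<bullet> \<alpha> \<noteq> 0)"

definition transvection_roots :: "nat \<Rightarrow> 'a::field vec \<Rightarrow> 'a mat set \<Rightarrow> 'a vec set" where
  "transvection_roots n c K =
     {\<alpha>. \<exists>t\<in>K. is_transvection n c t \<and> is_root_vector n c t \<alpha>}"

definition span_dim :: "nat \<Rightarrow> 'a::field vec set \<Rightarrow> nat" where
  "span_dim n S = vectorspace.dim class_ring
     ((module_vec TYPE('a) n)\<lparr>carrier := LinearCombinations.module.span class_ring (module_vec TYPE('a) n) S\<rparr>)"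

end

theory Submission
  imports Defs
begin


lemma Const_0[simp]: "Const 0 = (0::'a::comm_ring_1 mpoly)" by (simp add: Const_def)
lemma Const_1[simp]: "Const 1 = (1::'a::comm_ring_1 mpoly)" by (simp add: Const_def)
lemma Const_single: "Const a * Poly_Mapping.single m b = Poly_Mapping.single m (a * b)"
  by (simp add: Const_def mult_single)
lemma Const_pow: "Const a ^ j = (Const (a ^ j) :: 'a::comm_ring_1 mpoly)"
  by (induction j) (simp_all add: Const_def mult_single mult.commute)

lemma Var_pow: "Var k ^ j = (Poly_Mapping.single (Poly_Mapping.single k j) 1 :: 'a::comm_ring_1 mpoly)"
proof (induction j)
  case 0 then show ?case by simp
next
  case (Suc j) then show ?case
    by (simp add: Var_def mult_single single_add[symmetric])
qed

lemma sig_pow: "(Const a * Var k) ^ j = (Poly_Mapping.single (Poly_Mapping.single k j) (a ^ j) :: 'a::comm_ring_1 mpoly)"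
  by (simp add: power_mult_distrib Const_pow Var_pow Const_single)

lemma prod_singles: "finite S \<Longrightarrow> (\<Prod>k\<in>S. Poly_Mapping.single (h k) (c k)) =
   (Poly_Mapping.single (\<Sum>k\<in>S. h k) (\<Prod>k\<in>S. c k) :: ('b::comm_monoid_add \<Rightarrow>\<^sub>0 'a::comm_ring_1))"
  by (induction S rule: finite_induct) (simp_all add: mult_single)

lemma pm_decomp: "(\<Sum>k\<in>Poly_Mapping.keys m. Poly_Mapping.single k (Poly_Mapping.lookup m k)) = (m :: 'b \<Rightarrow>\<^sub>0 'c::comm_monoid_add)"
proof (rule poly_mapping_eqI)
  fix x
  show "Poly_Mapping.lookup (\<Sum>k\<in>Poly_Mapping.keys m. Poly_Mapping.single k (Poly_Mapping.lookup m k)) x = Poly_Mapping.lookup m x"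
    by (simp add: lookup_sum lookup_single when_def sum.delta in_keys_iff)
qed

lemma subst_diag: "subst (\<lambda>k. Const (a k) * Var k) f =
  (\<Sum>m\<in>Poly_Mapping.keys f. Poly_Mapping.single m (Poly_Mapping.lookup f m * (\<Prod>k\<in>Poly_Mapping.keys m. a k ^ Poly_Mapping.lookup m k)))"
  unfolding subst_def
  by (rule sum.cong[OF refl]) (simp add: sig_pow prod_singles pm_decomp Const_single)

lemma lookup_subst_diag: "Poly_Mapping.lookup (subst (\<lambda>k. Const (a k) * Var k) f) m =
   Poly_Mapping.lookup f m * (\<Prod>k\<in>Poly_Mapping.keys m. a k ^ Poly_Mapping.lookup m k)"
  by (auto simp add: subst_diag lookup_sum lookup_single when_def sum.delta in_keys_iff)

lemma subst_Var: "subst Var f = (f :: 'a::comm_ring_1 mpoly)"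
proof (rule poly_mapping_eqI)
  fix m
  have eq: "(\<lambda>k. Const 1 * Var k) = (Var :: nat \<Rightarrow> 'a mpoly)" by simp
  show "Poly_Mapping.lookup (subst Var f) m = Poly_Mapping.lookup f m"
    using lookup_subst_diag[of "\<lambda>_. 1" f m] unfolding eq by simp
qed

lemma dvd_prod_diff: "(\<And>x. x \<in> S \<Longrightarrow> d dvd f x - g x) \<Longrightarrow> (d::'a::comm_ring_1) dvd prod f S - prod g S"
proof (induction S rule: infinite_finite_induct)
  case (insert a S)
  have "prod f (insert a S) - prod g (insert a S) = f a * (prod f S - prod g S) + (f a - g a) * prod g S"
    using insert by (simp add: algebra_simps)
  then show ?case using insert by simp
qed auto

lemma dvd_power_diff: "(d::'a::comm_ring_1) dvd a - b \<Longrightarrow> d dvd a ^ j - b ^ j"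
  using dvd_prod_diff[of "{..<j}" d "\<lambda>_. a" "\<lambda>_. b"] by simp

lemma subst_cong: "(\<And>k. d dvd \<sigma> k - \<tau> k) \<Longrightarrow> d dvd subst \<sigma> f - subst \<tau> f"
  unfolding subst_def sum_subtractf[symmetric] right_diff_distrib[symmetric]
  by (intro dvd_sum dvd_mult dvd_prod_diff dvd_power_diff) auto

lemma dvd_Var_keys: assumes "Var j dvd (f::'a::field mpoly)" "m \<in> Poly_Mapping.keys f"
  shows "1 \<le> Poly_Mapping.lookup m j"
proof -
  obtain q where "f = Var j * q" using assms(1) by (auto elim: dvdE)
  then have "m \<in> Poly_Mapping.keys (Var j * q)" using assms by simp
  then obtain b where "m = Poly_Mapping.single j 1 + b"
    using keys_mult[of "Var j" q] by (auto simp: Var_def)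
  then show ?thesis by (simp add: lookup_add)
qed

lemma keys_Var_pow_dvd: assumes "\<forall>m\<in>Poly_Mapping.keys f. e \<le> Poly_Mapping.lookup m j"
  shows "Var j ^ e dvd (f::'a::comm_ring_1 mpoly)"
proof -
  let ?q = "\<Sum>m\<in>Poly_Mapping.keys f. Poly_Mapping.single (m - Poly_Mapping.single j e) (Poly_Mapping.lookup f m)"
  have "Var j ^ e * ?q = (\<Sum>m\<in>Poly_Mapping.keys f. Poly_Mapping.single m (Poly_Mapping.lookup f m))"
    unfolding sum_distrib_left Var_pow
  proof (rule sum.cong[OF refl])
    fix m assume m: "m \<in> Poly_Mapping.keys f"
    have "Poly_Mapping.single j e + (m - Poly_Mapping.single j e) = m"
      using assms m by (intro poly_mapping_eqI) (auto simp: lookup_add lookup_minus lookup_single when_def)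
    then show "Poly_Mapping.single (Poly_Mapping.single j e) 1 * Poly_Mapping.single (m - Poly_Mapping.single j e) (Poly_Mapping.lookup f m) =
         Poly_Mapping.single m (Poly_Mapping.lookup f m)" by (simp add: mult_single)
  qed
  also have "\<dots> = f" by (rule pm_decomp)
  finally show ?thesis by (metis dvdI)
qed



lemma sum_set_nth: "distinct xs \<Longrightarrow> sum g (set xs) = (\<Sum>r\<in>{0..<length xs}. g (xs ! r))"
proof -
  assume d: "distinct xs"
  have "set xs = (\<lambda>r. xs ! r) ` {0..<length xs}" by (auto simp: set_conv_nth)
  moreover have "inj_on (\<lambda>r. xs ! r) {0..<length xs}" using d by (simp add: inj_on_nth)
  ultimately show ?thesis by (simp add: sum.reindex)
qed

definition minor_mat :: "'a::comm_ring_1 mat \<Rightarrow> nat set \<Rightarrow> nat set \<Rightarrow> 'a mat" where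
  "minor_mat C I J = mat (card I) (card J)
      (\<lambda>(k, l). C $$ (sorted_list_of_set I ! k, sorted_list_of_set J ! l))"

lemma minor_zero_col:
  fixes C :: "'a::field mat"
  assumes fin: "finite I" "finite J" and card: "card I = card J" and y: "y \<in> J"
    and z: "\<forall>x\<in>I. C $$ (x, y) = 0"
  shows "minor C I J = 0"
proof -
  let ?k = "card J"
  let ?A = "minor_mat C I J"
  have A: "?A \<in> carrier_mat ?k ?k" using card by (simp add: minor_mat_def)
  have "y \<in> set (sorted_list_of_set J)" using y fin by simp
  then obtain l where l: "l < ?k" "sorted_list_of_set J ! l = y"
    by (auto simp: in_set_conv_nth)
  have "?A *\<^sub>v unit_vec ?k l = 0\<^sub>v ?k"
  proof (rule eq_vecI)
    fix r assume r: "r < dim_vec (0\<^sub>v ?k :: 'a vec)"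
    then have r': "r < card I" using card by simp
    have "sorted_list_of_set I ! r \<in> I" using r' fin
      by (metis length_sorted_list_of_set nth_mem set_sorted_list_of_set)
    then show "(?A *\<^sub>v unit_vec ?k l) $ r = 0\<^sub>v ?k $ r"
      using r r' l z A by (simp add: minor_mat_def)
  qed (use A in simp)
  then have "det ?A = 0"
    using det_0_iff_vec_prod_zero_field[OF A] l by (metis unit_vec_carrier unit_vec_nonzero)
  then show ?thesis by (simp add: minor_def minor_mat_def)
qed

lemma minor_id:
  fixes C :: "'a::field mat"
  assumes fin: "finite I" "finite J" and card: "card I = card J"
    and id: "\<forall>x\<in>I. \<forall>y\<in>J. C $$ (x, y) = (if x = y then 1 else 0)"
  shows "minor C I J = (if I = J then 1 else 0)"
proof (cases "I = J")
  case True
  have "minor_mat C I J = 1\<^sub>m (card J)"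
  proof (rule eq_matI)
    fix r l assume "r < dim_row (1\<^sub>m (card J) :: 'a mat)" "l < dim_col (1\<^sub>m (card J) :: 'a mat)"
    then have r: "r < length (sorted_list_of_set J)" "l < length (sorted_list_of_set J)" by auto
    have m: "sorted_list_of_set J ! r \<in> J" "sorted_list_of_set J ! l \<in> J"
      using r fin by (metis nth_mem set_sorted_list_of_set)+
    have "(sorted_list_of_set J ! r = sorted_list_of_set J ! l) = (r = l)"
      using r by (simp add: nth_eq_iff_index_eq)
    then show "minor_mat C I J $$ (r, l) = 1\<^sub>m (card J) $$ (r, l)"
      using r m id True by (simp add: minor_mat_def)
  qed (use True in \<open>auto simp: minor_mat_def\<close>)
  then show ?thesis using True by (simp add: minor_def minor_mat_def[symmetric])
next
  case False
  have "\<not> J \<subseteq> I" using False card fin card_subset_eq by metis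
  then obtain y where y: "y \<in> J" "y \<notin> I" by auto
  have "minor C I J = 0"
    by (rule minor_zero_col[OF fin card y(1)]) (use id y in auto)
  then show ?thesis using False by simp
qed

lemma minor_orth:
  fixes C :: "'a::field mat"
  assumes fin: "finite I" "finite J" and card: "card I = card J"
    and orth: "\<forall>y\<in>J. \<forall>y'\<in>J. (\<Sum>x\<in>I. C $$ (x, y) * C $$ (x, y')) = (if y = y' then 1 else 0)"
  shows "minor C I J \<noteq> 0"
proof -
  let ?k = "card J"
  let ?A = "minor_mat C I J"
  have A: "?A \<in> carrier_mat ?k ?k" using card by (simp add: minor_mat_def)
  have "transpose_mat ?A * ?A = 1\<^sub>m ?k"
  proof (rule eq_matI)
    fix l l' assume "l < dim_row (1\<^sub>m ?k :: 'a mat)" "l' < dim_col (1\<^sub>m ?k :: 'a mat)"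
    then have l: "l < length (sorted_list_of_set J)" "l' < length (sorted_list_of_set J)" by auto
    have m: "sorted_list_of_set J ! l \<in> J" "sorted_list_of_set J ! l' \<in> J"
      using l fin by (metis nth_mem set_sorted_list_of_set)+
    have eq: "(sorted_list_of_set J ! l = sorted_list_of_set J ! l') = (l = l')"
      using l by (simp add: nth_eq_iff_index_eq)
    have "(transpose_mat ?A * ?A) $$ (l, l') =
      (\<Sum>r\<in>{0..<card I}. C $$ (sorted_list_of_set I ! r, sorted_list_of_set J ! l) *
            C $$ (sorted_list_of_set I ! r, sorted_list_of_set J ! l'))"
      using l A card by (simp add: minor_mat_def scalar_prod_def)
    also have "\<dots> = (\<Sum>x\<in>I. C $$ (x, sorted_list_of_set J ! l) * C $$ (x, sorted_list_of_set J ! l'))"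
      using sum_set_nth[of "sorted_list_of_set I" "\<lambda>x. C $$ (x, sorted_list_of_set J ! l) * C $$ (x, sorted_list_of_set J ! l')"]
        fin by simp
    also have "\<dots> = 1\<^sub>m ?k $$ (l, l')" using orth m eq l by simp
    finally show "(transpose_mat ?A * ?A) $$ (l, l') = 1\<^sub>m ?k $$ (l, l')" .
  qed (use A in auto)
  then have "det (transpose_mat ?A) * det ?A = 1"
    using det_mult[of "transpose_mat ?A" ?k ?A] A by simp
  then have "det ?A \<noteq> 0" by auto
  then show ?thesis by (simp add: minor_def minor_mat_def)
qed



lemma col_mult_unit: "(g::'a::semiring_1 mat) \<in> carrier_mat n n \<Longrightarrow> b < n \<Longrightarrow> col g b = g *\<^sub>v unit_vec n b"
  by (intro eq_vecI) auto

lemma c_dot_unit: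
  fixes c :: "'a::semiring_1 vec"
  assumes "\<forall>i < n - 1. c $ i = 0" "c $ (n - 1) = 1" "b < n"
  shows "c \<bullet> unit_vec n b = (if b = n - 1 then 1 else 0)"
  using assms by auto

lemma fixH_col:
  fixes g :: "'a::semiring_1 mat"
  assumes g: "g \<in> carrier_mat n n" and fx: "\<forall>v\<in>carrier_vec n. c \<bullet> v = 0 \<longrightarrow> g *\<^sub>v v = v"
    and c: "\<forall>i < n - 1. c $ i = 0" and b: "b < n - 1"
  shows "col g b = unit_vec n b"
proof -
  have "c \<bullet> unit_vec n b = 0" using c b by simp
  then show ?thesis using fx g b col_mult_unit[OF g, of b] by auto
qed

lemma minv_props:
  assumes "mat_group n G" "g \<in> G"
  shows "minv n g \<in> carrier_mat n n \<and> g * minv n g = 1\<^sub>m n \<and> minv n g * g = 1\<^sub>m n"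
proof -
  have "\<exists>B. B \<in> carrier_mat n n \<and> g * B = 1\<^sub>m n \<and> B * g = 1\<^sub>m n"
    using assms unfolding mat_group_def by blast
  then show ?thesis unfolding minv_def by (rule someI_ex)
qed

lemma prod_entry: "M \<in> carrier_mat n n \<Longrightarrow> g \<in> carrier_mat n n \<Longrightarrow> a < n \<Longrightarrow> b < n \<Longrightarrow>
   (M * g) $$ (a, b) = row M a \<bullet> col g b"
  by simp

lemma minv_entry_fix:
  fixes M :: "'a::semiring_1 mat"
  assumes M: "M \<in> carrier_mat n n" and g: "g \<in> carrier_mat n n" and Mg: "M * g = 1\<^sub>m n"
    and col: "col g b = unit_vec n b" and a: "a < n" and b: "b < n"
  shows "M $$ (a, b) = (if a = b then 1 else 0)"
proof -
  have "(M * g) $$ (a, b) = M $$ (a, b)"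
    using prod_entry[OF M g a b] col M a b by simp
  then show ?thesis using Mg a b by simp
qed

lemma lin_poly_split:
  fixes r :: "'a::field vec"
  assumes n: "0 < n" and r: "r \<in> carrier_vec n" and rb: "\<forall>b < n - 1. r $ b = (if b = k then 1 else 0)"
  shows "lin_poly n r = (if k < n - 1 then Var k else 0) + Const (r $ (n - 1)) * Var (n - 1)"
proof -
  have U: "{..<n} = insert (n - 1) {..<n - 1}" using n by auto
  have "(\<Sum>i<n - 1. Const (r $ i) * Var i) = (\<Sum>i<n - 1. if i = k then Var k else 0)"
    by (rule sum.cong) (use rb in auto)
  also have "\<dots> = (if k < n - 1 then Var k else (0 :: 'a mpoly))"
    by (simp add: sum.delta')
  finally have "(\<Sum>i<n - 1. Const (r $ i) * Var i) = (if k < n - 1 then Var k else (0 :: 'a mpoly))" .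
  then show ?thesis unfolding lin_poly_def U by (simp add: add.commute)
qed

lemma lin_c:
  fixes c :: "'a::field vec"
  assumes n: "0 < n" and c: "c \<in> carrier_vec n" "\<forall>i < n - 1. c $ i = 0" "c $ (n - 1) = 1"
  shows "lin_poly n c = Var (n - 1)"
  using lin_poly_split[OF n c(1), of n] c by simp

lemma act_poly_cong:
  fixes g :: "'a::field mat"
  assumes n: "0 < n" and M: "minv n g \<in> carrier_mat n n" and g: "g \<in> carrier_mat n n"
    and Mg: "minv n g * g = 1\<^sub>m n" and cols: "\<forall>b < n - 1. col g b = unit_vec n b"
  shows "Var (n - 1) dvd act_poly n g f - f"
proof -
  have "Var (n - 1) dvd act_poly n g f - subst Var f"
    unfolding act_poly_def
  proof (rule subst_cong)
    fix k
    show "Var (n - 1) dvd (if k < n then lin_poly n (row (minv n g) k) else Var k) - Var k"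
    proof (cases "k < n")
      case True
      have rb: "\<forall>b < n - 1. row (minv n g) k $ b = (if b = k then 1 else 0)"
        using minv_entry_fix[OF M g Mg] cols True M by auto
      have "lin_poly n (row (minv n g) k) - Var k =
        (if k < n - 1 then 0 else - Var k) + Const (row (minv n g) k $ (n - 1)) * Var (n - 1)"
      proof -
        have rc: "row (minv n g) k \<in> carrier_vec n" using M by (auto simp: row_def)
        show ?thesis using lin_poly_split[OF n rc rb] by simp
      qed
      moreover have "k < n - 1 \<or> k = n - 1" using True by auto
      ultimately show ?thesis using True by auto
    qed simp
  qed
  then show ?thesis by (simp add: subst_Var)
qed



lemma Const_mult: "Const a * Const b = (Const (a * b) :: 'a::comm_ring_1 mpoly)"
  by (simp add: Const_def mult_single)

definition Dm :: "nat \<Rightarrow> 'a::field \<Rightarrow> 'a mat" where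
  "Dm n x = mat n n (\<lambda>(a, b). if a = b then (if a = n - 1 then x else 1) else 0)"

lemma Dm_mult: "Dm n x * Dm n y = Dm n (x * y)"
proof (rule eq_matI)
  fix a b assume ab: "a < dim_row (Dm n (x * y))" "b < dim_col (Dm n (x * y))"
  then have a: "a < n" "b < n" by (auto simp: Dm_def)
  have "(Dm n x * Dm n y) $$ (a, b) = (\<Sum>j\<in>{0..<n}. Dm n x $$ (a, j) * Dm n y $$ (j, b))"
    using a by (simp add: Dm_def scalar_prod_def)
  also have "\<dots> = (\<Sum>j\<in>{0..<n}. if j = a then Dm n x $$ (a, a) * Dm n y $$ (a, b) else 0)"
    by (rule sum.cong) (use a in \<open>auto simp: Dm_def\<close>)
  also have "\<dots> = Dm n (x * y) $$ (a, b)" using a by (simp add: Dm_def)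
  finally show "(Dm n x * Dm n y) $$ (a, b) = Dm n (x * y) $$ (a, b)" .
qed (auto simp: Dm_def)

lemma Dm_one: "Dm n 1 = 1\<^sub>m n"
  by (rule eq_matI) (auto simp: Dm_def)

lemma Dm_eq_one: "0 < n \<Longrightarrow> Dm n x = 1\<^sub>m n \<Longrightarrow> x = 1"
proof -
  assume n: "0 < n" and e: "Dm n x = 1\<^sub>m n"
  have "Dm n x $$ (n - 1, n - 1) = 1\<^sub>m n $$ (n - 1, n - 1)" using e by simp
  then show "x = 1" using n by (simp add: Dm_def)
qed

lemma Dm_pow: "s = Dm n x \<Longrightarrow> s ^\<^sub>m k = Dm n (x ^ k)"
proof (induction k)
  case 0 then show ?case by (simp add: Dm_one[symmetric]) (simp add: Dm_def)
next
  case (Suc k) then show ?case by (simp add: Dm_mult mult.commute)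
qed

lemma prod_alpha:
  "(\<Prod>k\<in>Poly_Mapping.keys m. (if k = j then z else 1) ^ Poly_Mapping.lookup m k) = (z::'a::field) ^ Poly_Mapping.lookup m j"
proof -
  have "(\<Prod>k\<in>Poly_Mapping.keys m. (if k = j then z else 1) ^ Poly_Mapping.lookup m k) =
     (\<Prod>k\<in>Poly_Mapping.keys m. if k = j then z ^ Poly_Mapping.lookup m k else 1)"
    by (rule prod.cong) auto
  also have "\<dots> = z ^ Poly_Mapping.lookup m j"
    by (simp add: prod.delta' in_keys_iff)
  finally show ?thesis .
qed



theorem lemma3p3:
  fixes n :: nat and c :: "'a::field vec" and G :: "'a mat set"
    and s :: "'a mat" and b :: nat and \<mu> :: "'a form" and J :: "nat set"
  defines "K \<equiv> {g \<in> G. det g = 1}"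
  defines "e \<equiv> card G div card K"
  assumes char: "(2::'a) \<noteq> 0"
    and n: "0 < n"
    and c: "c \<in> carrier_vec n"
    and basisH: "\<forall>i < n - 1. c $ i = 0"
    and ln: "c $ (n - 1) = 1"
    and grp: "mat_group n G" and fin: "finite G"
    and fixH: "\<forall>g\<in>G. \<forall>v\<in>carrier_vec n. c \<bullet> v = 0 \<longrightarrow> g *\<^sub>v v = v"
    and sG: "s \<in> G"
    and s_ord: "s ^\<^sub>m e = 1\<^sub>m n" "\<forall>k. 0 < k \<and> k < e \<longrightarrow> s ^\<^sub>m k \<noteq> 1\<^sub>m n"
    and s_diag: "e = 1 \<or> is_diag_reflection n c s"
    and eig: "\<exists>lam. s *\<^sub>v unit_vec n (n - 1) = lam \<cdot>\<^sub>v unit_vec n (n - 1)"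
    and b: "b = span_dim n (transvection_roots n c K)"
    and roots: "\<forall>i < b. unit_vec n i \<in> transvection_roots n c K"
    and form: "is_form n \<mu>"
    and J: "J \<subseteq> {..<n}" "J \<inter> {..<b} \<noteq> {}" "n - 1 \<notin> J"
  shows "(invariant_form n K \<mu> \<longrightarrow> lin_poly n c dvd \<mu> J)
       \<and> (invariant_form n G \<mu> \<longrightarrow> lin_poly n c ^ e dvd \<mu> J)"
proof -
  have KG: "K \<subseteq> G" unfolding K_def by auto
  have Gcar: "G \<subseteq> carrier_mat n n" using grp unfolding mat_group_def by auto
  have cols: "\<And>g bb. g \<in> G \<Longrightarrow> bb < n - 1 \<Longrightarrow> col g bb = unit_vec n bb"
    using fixH_col Gcar fixH basisH by blast
  have gp: "\<And>g. g \<in> G \<Longrightarrow> minv n g \<in> carrier_mat n n \<and> g * minv n g = 1\<^sub>m n \<and> minv n g * g = 1\<^sub>m n"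
    using minv_props[OF grp] by blast
  have Mfix: "\<And>g a bb. g \<in> G \<Longrightarrow> a < n \<Longrightarrow> bb < n - 1 \<Longrightarrow> minv n g $$ (a, bb) = (if a = bb then 1 else 0)"
  proof -
    fix g a bb assume g: "g \<in> G" "a < n" "bb < n - 1"
    show "minv n g $$ (a, bb) = (if a = bb then 1 else 0)"
      using minv_entry_fix[of "minv n g" n g bb a] gp[OF g(1)] Gcar g cols[OF g(1) g(3)] by auto
  qed
  have cong: "\<And>g f. g \<in> G \<Longrightarrow> Var (n - 1) dvd act_poly n g f - f"
    using act_poly_cong[OF n] gp Gcar cols by blast
  have lc: "lin_poly n c = Var (n - 1)" using lin_c[OF n c basisH ln] .
  obtain i where i: "i \<in> J" "i < b" using J(2) by auto
  have iJ: "i < n - 1"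
  proof -
    have "i < n" "i \<noteq> n - 1" using i(1) J(1) J(3) by auto
    then show ?thesis by linarith
  qed
  have Jlt: "\<And>y. y \<in> J \<Longrightarrow> y < n - 1"
  proof -
    fix y assume "y \<in> J"
    then have "y < n" "y \<noteq> n - 1" using J(1) J(3) by auto
    then show "y < n - 1" by linarith
  qed
  have finJ: "finite J" using J(1) finite_subset by blast
  have part1: "invariant_form n K \<mu> \<Longrightarrow> Var (n - 1) dvd \<mu> J"
  proof -
    assume invK: "invariant_form n K \<mu>"
    obtain t where t: "t \<in> K" "is_root_vector n c t (unit_vec n i)"
      using roots i unfolding transvection_roots_def by blast
    have tG: "t \<in> G" using t KG by auto
    have tc: "t \<in> carrier_mat n n" using tG Gcar by auto
    define M where "M = minv n t"
    have Mc: "M \<in> carrier_mat n n" and Mt: "M * t = 1\<^sub>m n" using gp[OF tG] M_def by auto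
    have ct: "c \<bullet> unit_vec n (n - 1) = 1" using ln n by simp
    have colt: "col t (n - 1) = unit_vec n (n - 1) + unit_vec n i"
      using t(2) col_mult_unit[OF tc, of "n - 1"] n ct unfolding is_root_vector_def by auto
    have Mlast: "\<And>a. a < n \<Longrightarrow> M $$ (a, n - 1) = (if a = n - 1 then 1 else 0) - (if a = i then 1 else 0)"
    proof -
      fix a assume a: "a < n"
      have ra: "row M a \<in> carrier_vec n" using Mc by (auto simp: row_def)
      have "(M * t) $$ (a, n - 1) = row M a \<bullet> col t (n - 1)" using a n Mc tc by simp
      also have "\<dots> = row M a \<bullet> unit_vec n (n - 1) + row M a \<bullet> unit_vec n i"
        unfolding colt by (rule scalar_prod_add_distrib[OF ra]) auto
      also have "\<dots> = M $$ (a, n - 1) + M $$ (a, i)" using a n iJ Mc by simp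
      also have "M $$ (a, i) = (if a = i then 1 else 0)" using Mfix[OF tG a iJ] M_def by simp
      finally show "M $$ (a, n - 1) = (if a = n - 1 then 1 else 0) - (if a = i then 1 else 0)"
        using Mt a n by simp
    qed
    have Mf: "\<And>a bb. a < n \<Longrightarrow> bb < n - 1 \<Longrightarrow> M $$ (a, bb) = (if a = bb then 1 else 0)"
      using Mfix[OF tG] M_def by simp
    define J' where "J' = insert (n - 1) (J - {i})"
    have finJ': "finite J'" using finJ J'_def by simp
    have J'sub: "J' \<subseteq> {..<n}" using J n unfolding J'_def by auto
    have cardJ': "card J' = card J"
    proof -
      have "card J' = Suc (card (J - {i}))" using finJ J(3) unfolding J'_def by simp
      also have "\<dots> = card J" using i(1) finJ card_Suc_Diff1 by metis
      finally show ?thesis .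
    qed
    have JJ': "J \<noteq> J'" using J(3) J'_def by auto
    define P where "P = {I \<in> Pow {..<n}. card I = card J'}"
    have finP: "finite P" unfolding P_def by simp
    have JP: "J \<in> P" "J' \<in> P" using J(1) J'sub cardJ' unfolding P_def by auto
    have m1: "minor M J' J' = 1"
    proof -
      have "\<forall>x\<in>J'. \<forall>y\<in>J'. M $$ (x, y) = (if x = y then 1 else 0)"
      proof (intro ballI)
        fix x y assume xy: "x \<in> J'" "y \<in> J'"
        then have "x < n" "y < n" "x \<noteq> i" "y \<noteq> i" using J'sub iJ unfolding J'_def by auto
        then show "M $$ (x, y) = (if x = y then 1 else 0)"
          using Mf Mlast by (cases "y = n - 1") auto
      qed
      then show ?thesis using minor_id[OF finJ' finJ'] by simp
    qed
    define d where "d = minor M J J'"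
    have dnz: "d \<noteq> 0"
    proof -
      have phi: "\<And>x y. x \<in> J \<Longrightarrow> y \<in> J' \<Longrightarrow> M $$ (x, y) =
         (if y = n - 1 then (if x = i then -1 else 0) else (if x = y then 1 else 0))"
      proof -
        fix x y assume xy: "x \<in> J" "y \<in> J'"
        then have "x < n" "y < n" "x \<noteq> n - 1" using J J'sub by auto
        then show "M $$ (x, y) = (if y = n - 1 then (if x = i then -1 else 0) else (if x = y then 1 else 0))"
          using Mf Mlast by (cases "y = n - 1") auto
      qed
      have "\<forall>y\<in>J'. \<forall>y'\<in>J'. (\<Sum>x\<in>J. M $$ (x, y) * M $$ (x, y')) = (if y = y' then 1 else 0)"
      proof (intro ballI)
        fix y y' assume yy: "y \<in> J'" "y' \<in> J'"
        have "(\<Sum>x\<in>J. M $$ (x, y) * M $$ (x, y')) =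
          (\<Sum>x\<in>J. (if y = n - 1 then (if x = i then -1 else 0) else (if x = y then 1 else 0)) *
             (if y' = n - 1 then (if x = i then -1 else 0) else (if x = y' then 1 else 0)))"
          by (rule sum.cong) (use phi yy in auto)
        also have "\<dots> = (if y = y' then 1 else 0)"
        proof -
          have yJ: "y \<noteq> n - 1 \<Longrightarrow> y \<in> J \<and> y \<noteq> i" "y' \<noteq> n - 1 \<Longrightarrow> y' \<in> J \<and> y' \<noteq> i"
            using yy unfolding J'_def by auto
          show ?thesis
          proof (cases "y = n - 1"; cases "y' = n - 1")
            assume a: "y = n - 1" "y' = n - 1"
            have "(\<Sum>x\<in>J. (if x = i then -1 else 0) * (if x = i then -1 else (0::'a))) =
                  (\<Sum>x\<in>J. if x = i then 1 else 0)"
              by (rule sum.cong) auto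
            then show ?thesis using a i(1) finJ by (simp add: sum.delta')
          next
            assume a: "y = n - 1" "y' \<noteq> n - 1"
            then show ?thesis using yJ(2)[OF a(2)] by (auto intro!: sum.neutral)
          next
            assume a: "y \<noteq> n - 1" "y' = n - 1"
            then show ?thesis using yJ(1)[OF a(1)] by (auto intro!: sum.neutral)
          next
            assume a: "y \<noteq> n - 1" "y' \<noteq> n - 1"
            have "(\<Sum>x\<in>J. (if x = y then 1 else 0) * (if x = y' then 1 else (0::'a))) =
                  (\<Sum>x\<in>J. if x = y then (if y = y' then 1 else 0) else 0)"
              by (rule sum.cong) auto
            then show ?thesis using a yJ(1)[OF a(1)] finJ by (simp add: sum.delta')
          qed
        qed
        finally show "(\<Sum>x\<in>J. M $$ (x, y) * M $$ (x, y')) = (if y = y' then 1 else 0)" .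
      qed
      then show ?thesis using minor_orth[OF finJ finJ'] cardJ' d_def by simp
    qed
    have m0: "\<And>I. I \<in> P - {J', J} \<Longrightarrow> minor M I J' = 0"
    proof -
      fix I assume I: "I \<in> P - {J', J}"
      have Isub: "I \<subseteq> {..<n}" and cI: "card I = card J'" using I unfolding P_def by auto
      have finI: "finite I" using Isub finite_subset by blast
      show "minor M I J' = 0"
      proof (cases "J - {i} \<subseteq> I")
        case False
        then obtain y where y: "y \<in> J" "y \<noteq> i" "y \<notin> I" by auto
        have yJ': "y \<in> J'" using y J'_def by auto
        have yl: "y < n - 1" using y Jlt by auto
        show ?thesis
          by (rule minor_zero_col[OF finI finJ' cI yJ']) (use Mf yl Isub y in auto)
      next
        case True
        have nI: "n - 1 \<notin> I"
        proof
          assume "n - 1 \<in> I"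
          then have "J' \<subseteq> I" using True J'_def by auto
          then have "J' = I" using card_subset_eq[OF finI] cI by metis
          then show False using I by auto
        qed
        have iI: "i \<notin> I"
        proof
          assume "i \<in> I"
          then have "J \<subseteq> I" using True by auto
          then have "J = I" using card_subset_eq[OF finI] cI cardJ' by metis
          then show False using I by auto
        qed
        show ?thesis
          by (rule minor_zero_col[OF finI finJ' cI, of "n - 1"]) (use Mlast Isub nI iI J'_def in auto)
      qed
    qed
    let ?A = "act_poly n t"
    have "\<mu> J' = act_form n t \<mu> J'" using invK t(1) unfolding invariant_form_def by auto
    also have "\<dots> = (\<Sum>I\<in>P. Const (minor M I J') * ?A (\<mu> I))"
      using J'sub unfolding act_form_def P_def M_def by simp
    also have "\<dots> = (\<Sum>I\<in>{J', J}. Const (minor M I J') * ?A (\<mu> I))"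
      by (rule sum.mono_neutral_right[OF finP]) (use JP m0 in auto)
    also have "\<dots> = ?A (\<mu> J') + Const d * ?A (\<mu> J)"
      using JJ' m1 d_def by simp
    finally have eqn: "\<mu> J' = ?A (\<mu> J') + Const d * ?A (\<mu> J)" .
    have "Const d * \<mu> J = (\<mu> J' - ?A (\<mu> J')) - Const d * (?A (\<mu> J) - \<mu> J)"
      using eqn by (simp add: algebra_simps)
    moreover have "Var (n - 1) dvd \<mu> J' - ?A (\<mu> J')"
      using cong[OF tG, of "\<mu> J'"] by (metis dvd_minus_iff minus_diff_eq)
    moreover have "Var (n - 1) dvd ?A (\<mu> J) - \<mu> J" using cong[OF tG] .
    ultimately have "Var (n - 1) dvd Const d * \<mu> J" by simp
    then have "Var (n - 1) dvd Const (1 / d) * (Const d * \<mu> J)" by simp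
    also have "Const (1 / d) * (Const d * \<mu> J) = \<mu> J"
      using dnz by (simp add: mult.assoc[symmetric] Const_mult)
    finally show "Var (n - 1) dvd \<mu> J" .
  qed
  have part2: "invariant_form n G \<mu> \<Longrightarrow> Var (n - 1) ^ e dvd \<mu> J"
  proof (cases "e = 0")
    case True then show ?thesis by simp
  next
    case False
    assume invG: "invariant_form n G \<mu>"
    then have "invariant_form n K \<mu>" using KG unfolding invariant_form_def by auto
    then have d1: "Var (n - 1) dvd \<mu> J" by (rule part1)
    obtain lam where lam: "s *\<^sub>v unit_vec n (n - 1) = lam \<cdot>\<^sub>v unit_vec n (n - 1)" using eig by blast
    have sc: "s \<in> carrier_mat n n" using sG Gcar by auto
    have cols_last: "col s (n - 1) = lam \<cdot>\<^sub>v unit_vec n (n - 1)"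
      using col_mult_unit[OF sc, of "n - 1"] n lam by simp
    have sD: "s = Dm n lam"
    proof (rule eq_matI)
      fix x y assume xy: "x < dim_row (Dm n lam)" "y < dim_col (Dm n lam)"
      then have x: "x < n" "y < n" by (auto simp: Dm_def)
      show "s $$ (x, y) = Dm n lam $$ (x, y)"
      proof (cases "y = n - 1")
        case True
        have "s $$ (x, y) = col s (n - 1) $ x" using x sc True by simp
        then show ?thesis using True x cols_last by (simp add: Dm_def)
      next
        case False
        then have "y < n - 1" using x by auto
        then have "col s y = unit_vec n y" using cols[OF sG] by simp
        moreover have "s $$ (x, y) = col s y $ x" using x sc by simp
        ultimately have "s $$ (x, y) = unit_vec n y $ x" by simp
        then show ?thesis using x False by (simp add: Dm_def)
      qed
    qed (use sc in \<open>auto simp: Dm_def\<close>)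
    have le: "lam ^ e = 1" using s_ord(1) Dm_pow[OF sD, of e] Dm_eq_one[OF n] by simp
    have lnot: "\<And>r. 0 < r \<Longrightarrow> r < e \<Longrightarrow> lam ^ r \<noteq> 1"
      using s_ord(2) Dm_pow[OF sD] Dm_one by metis
    have lnz: "lam \<noteq> 0" using le False by (metis power_0_left zero_neq_one)
    define Ms where "Ms = minv n s"
    have Msc: "Ms \<in> carrier_mat n n" and Mss: "Ms * s = 1\<^sub>m n" using gp[OF sG] Ms_def by auto
    have Msf: "\<And>a bb. a < n \<Longrightarrow> bb < n - 1 \<Longrightarrow> Ms $$ (a, bb) = (if a = bb then 1 else 0)"
      using Mfix[OF sG] Ms_def by simp
    have Msl: "\<And>a. a < n \<Longrightarrow> Ms $$ (a, n - 1) = (if a = n - 1 then 1 / lam else 0)"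
    proof -
      fix a assume a: "a < n"
      have ra: "row Ms a \<in> carrier_vec n" using Msc by (auto simp: row_def)
      have "(Ms * s) $$ (a, n - 1) = row Ms a \<bullet> col s (n - 1)" using a n Msc sc by simp
      also have "\<dots> = lam * Ms $$ (a, n - 1)"
        unfolding cols_last using ra a n Msc by simp
      finally show "Ms $$ (a, n - 1) = (if a = n - 1 then 1 / lam else 0)"
        using Mss a n lnz by (auto simp: field_simps)
    qed
    define al where "al = (\<lambda>k. if k = n - 1 then 1 / lam else (1::'a))"
    have sig: "(\<lambda>k. if k < n then lin_poly n (row Ms k) else Var k) = (\<lambda>k. Const (al k) * Var k)"
    proof
      fix k
      show "(if k < n then lin_poly n (row Ms k) else Var k) = Const (al k) * Var k"
      proof (cases "k < n")
        case True
        have rc: "row Ms k \<in> carrier_vec n" using Msc by (auto simp: row_def)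
        have rb: "\<forall>bb < n - 1. row Ms k $ bb = (if bb = k then 1 else 0)"
          using Msf True Msc by auto
        have "row Ms k $ (n - 1) = Ms $$ (k, n - 1)" using True n Msc by simp
        then show ?thesis using lin_poly_split[OF n rc rb] True Msl[OF True] al_def
          by (cases "k = n - 1") auto
      qed (use n in \<open>simp add: al_def\<close>)
    qed
    define Q where "Q = {I \<in> Pow {..<n}. card I = card J}"
    have finQ: "finite Q" unfolding Q_def by simp
    have JQ: "J \<in> Q" using J(1) unfolding Q_def by auto
    have mq: "\<And>I. I \<in> Q \<Longrightarrow> minor Ms I J = (if I = J then 1 else 0)"
    proof -
      fix I assume I: "I \<in> Q"
      have Isub: "I \<subseteq> {..<n}" and cI: "card I = card J" using I unfolding Q_def by auto
      have finI: "finite I" using Isub finite_subset by blast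
      show "minor Ms I J = (if I = J then 1 else 0)"
        by (rule minor_id[OF finI finJ cI]) (use Isub Jlt Msf in auto)
    qed
    have "\<mu> J = act_form n s \<mu> J" using invG sG unfolding invariant_form_def by auto
    also have "\<dots> = (\<Sum>I\<in>Q. Const (minor Ms I J) * act_poly n s (\<mu> I))"
      using J(1) unfolding act_form_def Q_def Ms_def by simp
    also have "\<dots> = (\<Sum>I\<in>Q. if I = J then act_poly n s (\<mu> I) else 0)"
      by (rule sum.cong) (auto simp: mq)
    also have "\<dots> = act_poly n s (\<mu> J)" using JQ finQ by (simp add: sum.delta')
    also have "\<dots> = subst (\<lambda>k. Const (al k) * Var k) (\<mu> J)"
      unfolding act_poly_def Ms_def[symmetric] sig ..
    finally have fixs: "\<mu> J = subst (\<lambda>k. Const (al k) * Var k) (\<mu> J)" .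
    have "\<forall>m\<in>Poly_Mapping.keys (\<mu> J). e \<le> Poly_Mapping.lookup m (n - 1)"
    proof
      fix m assume m: "m \<in> Poly_Mapping.keys (\<mu> J)"
      define dd where "dd = Poly_Mapping.lookup m (n - 1)"
      have d1': "1 \<le> dd" using dvd_Var_keys[OF d1 m] dd_def by simp
      have "Poly_Mapping.lookup (\<mu> J) m = Poly_Mapping.lookup (\<mu> J) m * (1 / lam) ^ dd"
        using arg_cong[OF fixs, of "\<lambda>p. Poly_Mapping.lookup p m"]
        unfolding lookup_subst_diag al_def prod_alpha dd_def by simp
      moreover have "Poly_Mapping.lookup (\<mu> J) m \<noteq> 0" using m by (simp add: in_keys_iff)
      ultimately have "(1 / lam) ^ dd = 1" by simp
      then have ld: "lam ^ dd = 1" by (simp add: power_one_over)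
      have eqd: "dd = e * (dd div e) + dd mod e" by simp
      have "lam ^ dd = lam ^ (e * (dd div e) + dd mod e)" using arg_cong[OF eqd, of "\<lambda>x. lam ^ x"] .
      then have "lam ^ dd = (lam ^ e) ^ (dd div e) * lam ^ (dd mod e)"
        unfolding power_add power_mult .
      then have lm: "lam ^ (dd mod e) = 1" using ld le by simp
      have "dd mod e = 0"
      proof (rule ccontr)
        assume "dd mod e \<noteq> 0"
        moreover have "dd mod e < e" using False by simp
        ultimately show False using lnot[of "dd mod e"] lm by simp
      qed
      then have "e dvd dd" by (simp add: dvd_eq_mod_eq_0)
      then show "e \<le> Poly_Mapping.lookup m (n - 1)"
        using d1' dd_def by (simp add: dvd_imp_le)
    qed
    then show ?thesis by (rule keys_Var_pow_dvd)
  qed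
  show ?thesis using part1 part2 lc by simp
qed


end
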